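(* Let $H$ be a finite-dimensional Hopf algebra over a field $\Bbbk$. Suppose $|G(H^* )|\neq1$, $G(H^* )\cap Z(H^* )=\{1\}$, $G(H)\cap Z(H)=\{1\}$, and there exists an odd prime $p$ dividing $|G(H^* )|$ such that $\alpha(g)\neq1$ for every $g\in G(H)$ of order $p$ and every $\alpha\in G(H^* )$ of order $p$. Then $H$ admits no universal $R$-matrix, i.e. there is no $R$ making $(H,R)$ quasitriangular.
   Context: A universal $R$-matrix for $H$ is an invertible $R\in H\otimes H$ with $(\Delta\otimes\mathrm{id})(R)=R_{13}R_{23}$, $(\mathrm{id}\otimes\Delta)(R)=R_{13}R_{12}$, $\tau\Delta(h)=R\Delta(h)R^{-1}$ for all $h$. $G(B)$ denotes the group of group-like elements of a Hopf algebra $B$ and $Z(B)$ its center; $H^*$ is the dual Hopf algebra. *)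

theory Defs
  imports "HOL-Computational_Algebra.Primes"
begin

text \<open>A finite-dimensional Hopf algebra H over a field 'k is given by structure
constants with respect to a basis indexed by the finite type 'b.  Elements of H
are coordinate vectors 'b \<Rightarrow> 'k, elements of H\<otimes>H are ('b\<times>'b) \<Rightarrow> 'k, elements of
H\<otimes>H\<otimes>H are ('b\<times>'b\<times>'b) \<Rightarrow> 'k, and elements of the dual H* are functionals given
by their values on the basis, 'b \<Rightarrow> 'k.\<close>

record ('b, 'k) hopf_sc =
  mc :: "'b \<Rightarrow> 'b \<Rightarrow> 'b \<Rightarrow> 'k"   (* e_i e_j = sum_k mc i j k e_k *)
  un :: "'b \<Rightarrow> 'k"                (* 1 = sum_k un k e_k *)
  dc :: "'b \<Rightarrow> 'b \<Rightarrow> 'b \<Rightarrow> 'k"   (* Delta e_i = sum_{j,k} dc i j k e_j (x) e_k *)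
  cu :: "'b \<Rightarrow> 'k"                (* epsilon(e_i) = cu i *)
  an :: "'b \<Rightarrow> 'b \<Rightarrow> 'k"         (* S e_i = sum_j an i j e_j *)

definition bvec :: "'b \<Rightarrow> 'b \<Rightarrow> 'k::field" where
  "bvec i = (\<lambda>j. if j = i then 1 else 0)"

definition hmul :: "('b::finite, 'k::field) hopf_sc \<Rightarrow> ('b \<Rightarrow> 'k) \<Rightarrow> ('b \<Rightarrow> 'k) \<Rightarrow> 'b \<Rightarrow> 'k" where
  "hmul H x y = (\<lambda>k. \<Sum>i\<in>UNIV. \<Sum>j\<in>UNIV. x i * y j * mc H i j k)"

definition hcomul :: "('b::finite, 'k::field) hopf_sc \<Rightarrow> ('b \<Rightarrow> 'k) \<Rightarrow> ('b \<times> 'b) \<Rightarrow> 'k" where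
  "hcomul H x = (\<lambda>(a, b). \<Sum>i\<in>UNIV. x i * dc H i a b)"

definition hcounit :: "('b::finite, 'k::field) hopf_sc \<Rightarrow> ('b \<Rightarrow> 'k) \<Rightarrow> 'k" where
  "hcounit H x = (\<Sum>i\<in>UNIV. x i * cu H i)"

definition hanti :: "('b::finite, 'k::field) hopf_sc \<Rightarrow> ('b \<Rightarrow> 'k) \<Rightarrow> 'b \<Rightarrow> 'k" where
  "hanti H x = (\<lambda>j. \<Sum>i\<in>UNIV. x i * an H i j)"

definition tmul :: "('b::finite, 'k::field) hopf_sc \<Rightarrow> ('b \<times> 'b \<Rightarrow> 'k) \<Rightarrow> ('b \<times> 'b \<Rightarrow> 'k) \<Rightarrow> 'b \<times> 'b \<Rightarrow> 'k" where
  "tmul H x y = (\<lambda>(k1, k2). \<Sum>i1\<in>UNIV. \<Sum>i2\<in>UNIV. \<Sum>j1\<in>UNIV. \<Sum>j2\<in>UNIV.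
      x (i1, i2) * y (j1, j2) * mc H i1 j1 k1 * mc H i2 j2 k2)"

definition tone :: "('b::finite, 'k::field) hopf_sc \<Rightarrow> 'b \<times> 'b \<Rightarrow> 'k" where
  "tone H = (\<lambda>(a, b). un H a * un H b)"

definition t3mul :: "('b::finite, 'k::field) hopf_sc \<Rightarrow> ('b \<times> 'b \<times> 'b \<Rightarrow> 'k) \<Rightarrow> ('b \<times> 'b \<times> 'b \<Rightarrow> 'k)
    \<Rightarrow> 'b \<times> 'b \<times> 'b \<Rightarrow> 'k" where
  "t3mul H x y = (\<lambda>(k1, k2, k3). \<Sum>i1\<in>UNIV. \<Sum>i2\<in>UNIV. \<Sum>i3\<in>UNIV. \<Sum>j1\<in>UNIV. \<Sum>j2\<in>UNIV. \<Sum>j3\<in>UNIV.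
      x (i1, i2, i3) * y (j1, j2, j3) * mc H i1 j1 k1 * mc H i2 j2 k2 * mc H i3 j3 k3)"

definition flip :: "('b \<times> 'b \<Rightarrow> 'k) \<Rightarrow> 'b \<times> 'b \<Rightarrow> 'k" where
  "flip x = (\<lambda>(a, b). x (b, a))"

definition delta_id :: "('b::finite, 'k::field) hopf_sc \<Rightarrow> ('b \<times> 'b \<Rightarrow> 'k) \<Rightarrow> 'b \<times> 'b \<times> 'b \<Rightarrow> 'k" where
  "delta_id H t = (\<lambda>(a, b, c). \<Sum>i\<in>UNIV. t (i, c) * dc H i a b)"

definition id_delta :: "('b::finite, 'k::field) hopf_sc \<Rightarrow> ('b \<times> 'b \<Rightarrow> 'k) \<Rightarrow> 'b \<times> 'b \<times> 'b \<Rightarrow> 'k" where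
  "id_delta H t = (\<lambda>(a, b, c). \<Sum>i\<in>UNIV. t (a, i) * dc H i b c)"

definition leg12 :: "('b, 'k::field) hopf_sc \<Rightarrow> ('b \<times> 'b \<Rightarrow> 'k) \<Rightarrow> 'b \<times> 'b \<times> 'b \<Rightarrow> 'k" where
  "leg12 H R = (\<lambda>(a, b, c). R (a, b) * un H c)"

definition leg13 :: "('b, 'k::field) hopf_sc \<Rightarrow> ('b \<times> 'b \<Rightarrow> 'k) \<Rightarrow> 'b \<times> 'b \<times> 'b \<Rightarrow> 'k" where
  "leg13 H R = (\<lambda>(a, b, c). R (a, c) * un H b)"

definition leg23 :: "('b, 'k::field) hopf_sc \<Rightarrow> ('b \<times> 'b \<Rightarrow> 'k) \<Rightarrow> 'b \<times> 'b \<times> 'b \<Rightarrow> 'k" where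
  "leg23 H R = (\<lambda>(a, b, c). un H a * R (b, c))"

definition is_hopf :: "('b::finite, 'k::field) hopf_sc \<Rightarrow> bool" where
  "is_hopf H \<longleftrightarrow>
     (\<forall>x y z. hmul H (hmul H x y) z = hmul H x (hmul H y z)) \<and>
     (\<forall>x. hmul H (un H) x = x \<and> hmul H x (un H) = x) \<and>
     (\<forall>x. delta_id H (hcomul H x) = id_delta H (hcomul H x)) \<and>
     (\<forall>x. (\<lambda>c. \<Sum>a\<in>UNIV. hcomul H x (a, c) * cu H a) = x \<and>
          (\<lambda>a. \<Sum>c\<in>UNIV. hcomul H x (a, c) * cu H c) = x) \<and>
     (\<forall>x y. hcomul H (hmul H x y) = tmul H (hcomul H x) (hcomul H y)) \<and>
     hcomul H (un H) = tone H \<and>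
     (\<forall>x y. hcounit H (hmul H x y) = hcounit H x * hcounit H y) \<and>
     hcounit H (un H) = 1 \<and>
     (\<forall>x. (\<lambda>k. \<Sum>a\<in>UNIV. \<Sum>b\<in>UNIV. hcomul H x (a, b) * hmul H (hanti H (bvec a)) (bvec b) k)
            = (\<lambda>k. hcounit H x * un H k)) \<and>
     (\<forall>x. (\<lambda>k. \<Sum>a\<in>UNIV. \<Sum>b\<in>UNIV. hcomul H x (a, b) * hmul H (bvec a) (hanti H (bvec b)) k)
            = (\<lambda>k. hcounit H x * un H k))"

definition grouplikes :: "('b::finite, 'k::field) hopf_sc \<Rightarrow> ('b \<Rightarrow> 'k) set" where
  "grouplikes H = {g. g \<noteq> (\<lambda>_. 0) \<and> hcomul H g = (\<lambda>(a, b). g a * g b)}"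

definition center :: "('b::finite, 'k::field) hopf_sc \<Rightarrow> ('b \<Rightarrow> 'k) set" where
  "center H = {z. \<forall>x. hmul H z x = hmul H x z}"

text \<open>The dual Hopf algebra H*: a functional f is given by its values f(e_i).
Product = convolution, unit = counit of H, coproduct = transpose of the multiplication.\<close>

definition dmul :: "('b::finite, 'k::field) hopf_sc \<Rightarrow> ('b \<Rightarrow> 'k) \<Rightarrow> ('b \<Rightarrow> 'k) \<Rightarrow> 'b \<Rightarrow> 'k" where
  "dmul H f g = (\<lambda>k. \<Sum>a\<in>UNIV. \<Sum>b\<in>UNIV. dc H k a b * f a * g b)"

definition dcomul :: "('b::finite, 'k::field) hopf_sc \<Rightarrow> ('b \<Rightarrow> 'k) \<Rightarrow> 'b \<times> 'b \<Rightarrow> 'k" where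
  "dcomul H f = (\<lambda>(a, b). \<Sum>k\<in>UNIV. mc H a b k * f k)"

definition dual_grouplikes :: "('b::finite, 'k::field) hopf_sc \<Rightarrow> ('b \<Rightarrow> 'k) set" where
  "dual_grouplikes H = {f. f \<noteq> (\<lambda>_. 0) \<and> dcomul H f = (\<lambda>(a, b). f a * f b)}"

definition dual_center :: "('b::finite, 'k::field) hopf_sc \<Rightarrow> ('b \<Rightarrow> 'k) set" where
  "dual_center H = {f. \<forall>g. dmul H f g = dmul H g f}"

definition eval :: "('b::finite \<Rightarrow> 'k::field) \<Rightarrow> ('b \<Rightarrow> 'k) \<Rightarrow> 'k" where
  "eval f x = (\<Sum>i\<in>UNIV. f i * x i)"

definition elem_ord :: "('a \<Rightarrow> 'a \<Rightarrow> 'a) \<Rightarrow> 'a \<Rightarrow> 'a \<Rightarrow> nat" where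
  "elem_ord mul e x = (LEAST n. 0 < n \<and> (mul x ^^ n) e = e)"

definition is_universal_R :: "('b::finite, 'k::field) hopf_sc \<Rightarrow> ('b \<times> 'b \<Rightarrow> 'k) \<Rightarrow> bool" where
  "is_universal_R H R \<longleftrightarrow>
     (\<exists>R'. tmul H R R' = tone H \<and> tmul H R' R = tone H \<and>
           (\<forall>h. flip (hcomul H h) = tmul H (tmul H R (hcomul H h)) R')) \<and>
     delta_id H R = t3mul H (leg13 H R) (leg23 H R) \<and>
     id_delta H R = t3mul H (leg13 H R) (leg12 H R)"

end

theory Submission
  imports Defs "HOL-Algebra.Multiplicative_Group" "HOL-Algebra.Sylow" "HOL-Library.Function_Algebras"
begin

hide_const (open) UnivPoly.eval


definition Lf :: "('b::finite \<Rightarrow> 'k::field) \<Rightarrow> ('b \<times> 'b \<Rightarrow> 'k) \<Rightarrow> 'b \<Rightarrow> 'k" where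
  "Lf \<alpha> X = (\<lambda>c. \<Sum>a\<in>UNIV. \<alpha> a * X (a, c))"
definition Rf :: "('b::finite \<Rightarrow> 'k::field) \<Rightarrow> ('b \<times> 'b \<Rightarrow> 'k) \<Rightarrow> 'b \<Rightarrow> 'k" where
  "Rf \<alpha> X = (\<lambda>a. \<Sum>c\<in>UNIV. X (a, c) * \<alpha> c)"
definition multf :: "('b::finite, 'k::field) hopf_sc \<Rightarrow> ('b \<Rightarrow> 'k) \<Rightarrow> bool" where
  "multf H \<alpha> \<longleftrightarrow> (\<forall>a b. (\<Sum>k\<in>UNIV. mc H a b k * \<alpha> k) = \<alpha> a * \<alpha> b)"

lemma multfD: "multf H \<alpha> \<Longrightarrow> (\<Sum>k\<in>UNIV. mc H a b k * \<alpha> k) = \<alpha> a * \<alpha> b"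
  by (simp add: multf_def)

lemma push4: "(\<Sum>a\<in>A. \<Sum>i1\<in>A1. \<Sum>i2\<in>A2. \<Sum>j1\<in>B1. \<Sum>j2\<in>B2. F a i1 i2 j1 j2) =
   (\<Sum>i1\<in>A1. \<Sum>i2\<in>A2. \<Sum>j1\<in>B1. \<Sum>j2\<in>B2. \<Sum>a\<in>A. F a i1 i2 j1 j2)"
  by (simp only: sum.swap[where A=A and B=A1] sum.swap[where A=A and B=A2] sum.swap[where A=A and B=B1] sum.swap[where A=A and B=B2])

lemma permL: "(\<Sum>i1\<in>A1. \<Sum>i2\<in>A2. \<Sum>j1\<in>B1. \<Sum>j2\<in>B2. F i1 i2 j1 j2) = (\<Sum>i1\<in>A1. \<Sum>j1\<in>B1. \<Sum>i2\<in>A2. \<Sum>j2\<in>B2. F i1 i2 j1 j2)"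
  by (simp only: sum.swap[where A=A2 and B=B1])

lemma permR: "(\<Sum>i1\<in>A1. \<Sum>i2\<in>A2. \<Sum>j1\<in>B1. \<Sum>j2\<in>B2. F i1 i2 j1 j2) = (\<Sum>i2\<in>A2. \<Sum>j2\<in>B2. \<Sum>i1\<in>A1. \<Sum>j1\<in>B1. F i1 i2 j1 j2)"
  by (simp only: sum.swap[where A=A1 and B=A2] sum.swap[where A=A1 and B=B2] sum.swap[where A=B1 and B=B2])

lemma permLf: "(\<Sum>i1\<in>A1. \<Sum>i2\<in>A2. \<Sum>j1\<in>B1. \<Sum>j2\<in>B2. F i1 i2 j1 j2) = (\<Sum>i2\<in>A2. \<Sum>j2\<in>B2. \<Sum>j1\<in>B1. \<Sum>i1\<in>A1. F i1 i2 j1 j2)"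
  by (simp only: sum.swap[where A=A1 and B=A2] sum.swap[where A=A1 and B=B2] sum.swap[where A=A1 and B=B1] sum.swap[where A=B1 and B=B2])

lemma permRf: "(\<Sum>i1\<in>A1. \<Sum>i2\<in>A2. \<Sum>j1\<in>B1. \<Sum>j2\<in>B2. F i1 i2 j1 j2) = (\<Sum>i1\<in>A1. \<Sum>j1\<in>B1. \<Sum>j2\<in>B2. \<Sum>i2\<in>A2. F i1 i2 j1 j2)"
  by (simp only: sum.swap[where A=A2 and B=B1] sum.swap[where A=A2 and B=B2])

lemma Lf_tmul:
  assumes "multf H \<alpha>"
  shows "Lf \<alpha> (tmul H X Y) = hmul H (Lf \<alpha> X) (Lf \<alpha> Y)"
proof
  fix c
  have "Lf \<alpha> (tmul H X Y) c = (\<Sum>a\<in>UNIV. \<Sum>i1\<in>UNIV. \<Sum>i2\<in>UNIV. \<Sum>j1\<in>UNIV. \<Sum>j2\<in>UNIV. \<alpha> a * (X (i1, i2) * Y (j1, j2) * mc H i1 j1 a * mc H i2 j2 c))"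
    by (simp add: Lf_def tmul_def sum_distrib_left)
  also have "\<dots> = (\<Sum>i1\<in>UNIV. \<Sum>i2\<in>UNIV. \<Sum>j1\<in>UNIV. \<Sum>j2\<in>UNIV. \<Sum>a\<in>UNIV. \<alpha> a * (X (i1, i2) * Y (j1, j2) * mc H i1 j1 a * mc H i2 j2 c))"
    by (rule push4)
  also have "\<dots> = (\<Sum>i1\<in>UNIV. \<Sum>i2\<in>UNIV. \<Sum>j1\<in>UNIV. \<Sum>j2\<in>UNIV. (X (i1, i2) * Y (j1, j2) * mc H i2 j2 c) * (\<Sum>a\<in>UNIV. mc H i1 j1 a * \<alpha> a))"
    by (simp add: sum_distrib_left mult_ac)
  also have "\<dots> = (\<Sum>i1\<in>UNIV. \<Sum>i2\<in>UNIV. \<Sum>j1\<in>UNIV. \<Sum>j2\<in>UNIV. (X (i1, i2) * Y (j1, j2) * mc H i2 j2 c) * (\<alpha> i1 * \<alpha> j1))"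
    using assms by (simp add: multfD)
  also have "\<dots> = (\<Sum>i2\<in>UNIV. \<Sum>j2\<in>UNIV. \<Sum>j1\<in>UNIV. \<Sum>i1\<in>UNIV. (X (i1, i2) * Y (j1, j2) * mc H i2 j2 c) * (\<alpha> i1 * \<alpha> j1))"
    by (rule permLf)
  also have "\<dots> = hmul H (Lf \<alpha> X) (Lf \<alpha> Y) c"
    by (simp add: hmul_def Lf_def sum_distrib_left sum_distrib_right mult_ac)
  finally show "Lf \<alpha> (tmul H X Y) c = hmul H (Lf \<alpha> X) (Lf \<alpha> Y) c" .
qed

lemma Rf_tmul:
  assumes "multf H \<alpha>"
  shows "Rf \<alpha> (tmul H X Y) = hmul H (Rf \<alpha> X) (Rf \<alpha> Y)"
proof
  fix c
  have "Rf \<alpha> (tmul H X Y) c = (\<Sum>a\<in>UNIV. \<Sum>i1\<in>UNIV. \<Sum>i2\<in>UNIV. \<Sum>j1\<in>UNIV. \<Sum>j2\<in>UNIV. \<alpha> a * (X (i1, i2) * Y (j1, j2) * mc H i1 j1 c * mc H i2 j2 a))"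
    by (simp add: Rf_def tmul_def sum_distrib_left sum_distrib_right mult_ac)
  also have "\<dots> = (\<Sum>i1\<in>UNIV. \<Sum>i2\<in>UNIV. \<Sum>j1\<in>UNIV. \<Sum>j2\<in>UNIV. \<Sum>a\<in>UNIV. \<alpha> a * (X (i1, i2) * Y (j1, j2) * mc H i1 j1 c * mc H i2 j2 a))"
    by (rule push4)
  also have "\<dots> = (\<Sum>i1\<in>UNIV. \<Sum>i2\<in>UNIV. \<Sum>j1\<in>UNIV. \<Sum>j2\<in>UNIV. (X (i1, i2) * Y (j1, j2) * mc H i1 j1 c) * (\<Sum>a\<in>UNIV. mc H i2 j2 a * \<alpha> a))"
    by (simp add: sum_distrib_left mult_ac)
  also have "\<dots> = (\<Sum>i1\<in>UNIV. \<Sum>i2\<in>UNIV. \<Sum>j1\<in>UNIV. \<Sum>j2\<in>UNIV. (X (i1, i2) * Y (j1, j2) * mc H i1 j1 c) * (\<alpha> i2 * \<alpha> j2))"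
    using assms by (simp add: multfD)
  also have "\<dots> = (\<Sum>i1\<in>UNIV. \<Sum>j1\<in>UNIV. \<Sum>j2\<in>UNIV. \<Sum>i2\<in>UNIV. (X (i1, i2) * Y (j1, j2) * mc H i1 j1 c) * (\<alpha> i2 * \<alpha> j2))"
    by (rule permRf)
  also have "\<dots> = hmul H (Rf \<alpha> X) (Rf \<alpha> Y) c"
    by (simp add: hmul_def Rf_def sum_distrib_left sum_distrib_right mult_ac)
  finally show "Rf \<alpha> (tmul H X Y) c = hmul H (Rf \<alpha> X) (Rf \<alpha> Y) c" .
qed

lemma tmul_simple:
  "tmul H (\<lambda>(a, b). u a * v b) (\<lambda>(a, b). s a * t b) = (\<lambda>(k1, k2). hmul H u s k1 * hmul H v t k2)"
proof (rule ext, clarify)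
  fix k1 k2
  have "tmul H (\<lambda>(a, b). u a * v b) (\<lambda>(a, b). s a * t b) (k1, k2) =
    (\<Sum>i1\<in>UNIV. \<Sum>i2\<in>UNIV. \<Sum>j1\<in>UNIV. \<Sum>j2\<in>UNIV. (u i1 * s j1 * mc H i1 j1 k1) * (v i2 * t j2 * mc H i2 j2 k2))"
    by (simp add: tmul_def mult_ac)
  also have "\<dots> = (\<Sum>i2\<in>UNIV. \<Sum>j2\<in>UNIV. \<Sum>i1\<in>UNIV. \<Sum>j1\<in>UNIV. (u i1 * s j1 * mc H i1 j1 k1) * (v i2 * t j2 * mc H i2 j2 k2))"
    by (rule permR)
  also have "\<dots> = hmul H u s k1 * hmul H v t k2"
    by (simp add: hmul_def sum_distrib_left sum_distrib_right)
  finally show "tmul H (\<lambda>(a, b). u a * v b) (\<lambda>(a, b). s a * t b) (k1, k2) = hmul H u s k1 * hmul H v t k2" .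
qed


lemma push2_6: "(\<Sum>a\<in>Sa. \<Sum>b\<in>Sb. \<Sum>i1\<in>Si1. \<Sum>i2\<in>Si2. \<Sum>i3\<in>Si3. \<Sum>j1\<in>Sj1. \<Sum>j2\<in>Sj2. \<Sum>j3\<in>Sj3. F a b i1 i2 i3 j1 j2 j3) = (\<Sum>i1\<in>Si1. \<Sum>i2\<in>Si2. \<Sum>i3\<in>Si3. \<Sum>j1\<in>Sj1. \<Sum>j2\<in>Sj2. \<Sum>j3\<in>Sj3. \<Sum>a\<in>Sa. \<Sum>b\<in>Sb. F a b i1 i2 i3 j1 j2 j3)"
  by (simp only: sum.swap[where A=Sa and B=Si1] sum.swap[where A=Sa and B=Si2] sum.swap[where A=Sa and B=Si3] sum.swap[where A=Sa and B=Sj1] sum.swap[where A=Sa and B=Sj2] sum.swap[where A=Sa and B=Sj3] sum.swap[where A=Sb and B=Sa] sum.swap[where A=Sb and B=Si1] sum.swap[where A=Sb and B=Si2] sum.swap[where A=Sb and B=Si3] sum.swap[where A=Sb and B=Sj1] sum.swap[where A=Sb and B=Sj2] sum.swap[where A=Sb and B=Sj3] sum.swap[where A=Si2 and B=Si1] sum.swap[where A=Si3 and B=Si1] sum.swap[where A=Si3 and B=Si2] sum.swap[where A=Sj1 and B=Si1] sum.swap[where A=Sj1 and B=Si2] sum.swap[where A=Sj1 and B=Si3] sum.swap[where A=Sj2 and B=Si1] sum.swap[where A=Sj2 and B=Si2] sum.swap[where A=Sj2 and B=Si3] sum.swap[where A=Sj2 and B=Sj1] sum.swap[where A=Sj3 and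 B=Si1] sum.swap[where A=Sj3 and B=Si2] sum.swap[where A=Sj3 and B=Si3] sum.swap[where A=Sj3 and B=Sj1] sum.swap[where A=Sj3 and B=Sj2])

lemma push1_6: "(\<Sum>a\<in>Sa. \<Sum>i1\<in>Si1. \<Sum>i2\<in>Si2. \<Sum>i3\<in>Si3. \<Sum>j1\<in>Sj1. \<Sum>j2\<in>Sj2. \<Sum>j3\<in>Sj3. F a i1 i2 i3 j1 j2 j3) = (\<Sum>i1\<in>Si1. \<Sum>i2\<in>Si2. \<Sum>i3\<in>Si3. \<Sum>j1\<in>Sj1. \<Sum>j2\<in>Sj2. \<Sum>j3\<in>Sj3. \<Sum>a\<in>Sa. F a i1 i2 i3 j1 j2 j3)"
  by (simp only: sum.swap[where A=Sa and B=Si1] sum.swap[where A=Sa and B=Si2] sum.swap[where A=Sa and B=Si3] sum.swap[where A=Sa and B=Sj1] sum.swap[where A=Sa and B=Sj2] sum.swap[where A=Sa and B=Sj3] sum.swap[where A=Si2 and B=Si1] sum.swap[where A=Si3 and B=Si1] sum.swap[where A=Si3 and B=Si2] sum.swap[where A=Sj1 and B=Si1] sum.swap[where A=Sj1 and B=Si2] sum.swap[where A=Sj1 and B=Si3] sum.swap[where A=Sj2 and B=Si1] sum.swap[where A=Sj2 and B=Si2] sum.swap[where A=Sj2 and B=Si3] sum.swap[where A=Sj2 and B=Sj1] sum.swap[where A=Sj3 and B=Si1] sum.swap[where A=Sj3 and B=Si2] sum.swap[where A=Sj3 and B=Si3] sum.swap[where A=Sj3 and B=Sj1] sum.swap[where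 A=Sj3 and B=Sj2])

lemma permA3: "(\<Sum>i1\<in>Si1. \<Sum>i2\<in>Si2. \<Sum>i3\<in>Si3. \<Sum>j1\<in>Sj1. \<Sum>j2\<in>Sj2. \<Sum>j3\<in>Sj3. F i1 i2 i3 j1 j2 j3) = (\<Sum>i3\<in>Si3. \<Sum>j3\<in>Sj3. \<Sum>j1\<in>Sj1. \<Sum>i1\<in>Si1. \<Sum>i2\<in>Si2. \<Sum>j2\<in>Sj2. F i1 i2 i3 j1 j2 j3)"
  by (simp only: sum.swap[where A=Si1 and B=Si3] sum.swap[where A=Si1 and B=Sj1] sum.swap[where A=Si1 and B=Sj3] sum.swap[where A=Si2 and B=Si1] sum.swap[where A=Si2 and B=Si3] sum.swap[where A=Si2 and B=Sj1] sum.swap[where A=Si2 and B=Sj3] sum.swap[where A=Sj1 and B=Si3] sum.swap[where A=Sj1 and B=Sj3] sum.swap[where A=Sj2 and B=Si1] sum.swap[where A=Sj2 and B=Si2] sum.swap[where A=Sj2 and B=Si3] sum.swap[where A=Sj2 and B=Sj1] sum.swap[where A=Sj2 and B=Sj3] sum.swap[where A=Sj3 and B=Si3])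

lemma permB3: "(\<Sum>i1\<in>Si1. \<Sum>i2\<in>Si2. \<Sum>i3\<in>Si3. \<Sum>j1\<in>Sj1. \<Sum>j2\<in>Sj2. \<Sum>j3\<in>Sj3. F i1 i2 i3 j1 j2 j3) = (\<Sum>i2\<in>Si2. \<Sum>i3\<in>Si3. \<Sum>j2\<in>Sj2. \<Sum>j3\<in>Sj3. \<Sum>j1\<in>Sj1. \<Sum>i1\<in>Si1. F i1 i2 i3 j1 j2 j3)"
  by (simp only: sum.swap[where A=Si1 and B=Si2] sum.swap[where A=Si1 and B=Si3] sum.swap[where A=Si1 and B=Sj1] sum.swap[where A=Si1 and B=Sj2] sum.swap[where A=Si1 and B=Sj3] sum.swap[where A=Si3 and B=Si2] sum.swap[where A=Sj1 and B=Si2] sum.swap[where A=Sj1 and B=Si3] sum.swap[where A=Sj1 and B=Sj2] sum.swap[where A=Sj1 and B=Sj3] sum.swap[where A=Sj2 and B=Si2] sum.swap[where A=Sj2 and B=Si3] sum.swap[where A=Sj3 and B=Si2] sum.swap[where A=Sj3 and B=Si3] sum.swap[where A=Sj3 and B=Sj2])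

lemma permC3: "(\<Sum>i1\<in>Si1. \<Sum>i2\<in>Si2. \<Sum>i3\<in>Si3. \<Sum>j1\<in>Sj1. \<Sum>j2\<in>Sj2. \<Sum>j3\<in>Sj3. F i1 i2 i3 j1 j2 j3) = (\<Sum>i1\<in>Si1. \<Sum>i2\<in>Si2. \<Sum>j1\<in>Sj1. \<Sum>j2\<in>Sj2. \<Sum>j3\<in>Sj3. \<Sum>i3\<in>Si3. F i1 i2 i3 j1 j2 j3)"
  by (simp only: sum.swap[where A=Si2 and B=Si1] sum.swap[where A=Si3 and B=Si1] sum.swap[where A=Si3 and B=Si2] sum.swap[where A=Si3 and B=Sj1] sum.swap[where A=Si3 and B=Sj2] sum.swap[where A=Si3 and B=Sj3] sum.swap[where A=Sj1 and B=Si1] sum.swap[where A=Sj1 and B=Si2] sum.swap[where A=Sj2 and B=Si1] sum.swap[where A=Sj2 and B=Si2] sum.swap[where A=Sj2 and B=Sj1] sum.swap[where A=Sj3 and B=Si1] sum.swap[where A=Sj3 and B=Si2] sum.swap[where A=Sj3 and B=Sj1] sum.swap[where A=Sj3 and B=Sj2])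

definition A3 :: "('b::finite \<Rightarrow> 'k::field) \<Rightarrow> ('b \<Rightarrow> 'k) \<Rightarrow> ('b \<times> 'b \<times> 'b \<Rightarrow> 'k) \<Rightarrow> 'b \<Rightarrow> 'k" where
  "A3 \<alpha> \<beta> T = (\<lambda>c. \<Sum>a\<in>UNIV. \<Sum>b\<in>UNIV. \<alpha> a * \<beta> b * T (a, b, c))"
definition B3 :: "('b::finite \<Rightarrow> 'k::field) \<Rightarrow> ('b \<times> 'b \<times> 'b \<Rightarrow> 'k) \<Rightarrow> 'b \<times> 'b \<Rightarrow> 'k" where
  "B3 \<alpha> T = (\<lambda>(a, b). \<Sum>k\<in>UNIV. \<alpha> k * T (k, a, b))"
definition C3 :: "('b::finite \<Rightarrow> 'k::field) \<Rightarrow> ('b \<times> 'b \<times> 'b \<Rightarrow> 'k) \<Rightarrow> 'b \<times> 'b \<Rightarrow> 'k" where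
  "C3 \<alpha> T = (\<lambda>(a, b). \<Sum>c\<in>UNIV. T (a, b, c) * \<alpha> c)"

lemma sep2: "((\<Sum>a\<in>A. \<Sum>b\<in>B. f a * g b * K) :: 'k::field) = K * ((\<Sum>a\<in>A. f a) * (\<Sum>b\<in>B. g b))"
proof -
  have "K * ((\<Sum>a\<in>A. f a) * (\<Sum>b\<in>B. g b)) = K * (\<Sum>a\<in>A. \<Sum>b\<in>B. f a * g b)"
    by (simp only: sum_product)
  also have "\<dots> = (\<Sum>a\<in>A. \<Sum>b\<in>B. K * (f a * g b))"
    by (simp only: sum_distrib_left)
  finally show ?thesis by (simp add: mult_ac)
qed

lemma A3_t3mul:
  assumes "multf H \<alpha>" "multf H \<beta>"
  shows "A3 \<alpha> \<beta> (t3mul H X Y) = hmul H (A3 \<alpha> \<beta> X) (A3 \<alpha> \<beta> Y)"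
proof
  fix c
  have "A3 \<alpha> \<beta> (t3mul H X Y) c = (\<Sum>a\<in>UNIV. \<Sum>b\<in>UNIV. \<Sum>i1\<in>UNIV. \<Sum>i2\<in>UNIV. \<Sum>i3\<in>UNIV. \<Sum>j1\<in>UNIV. \<Sum>j2\<in>UNIV. \<Sum>j3\<in>UNIV.
      (mc H i1 j1 a * \<alpha> a) * (mc H i2 j2 b * \<beta> b) * (X (i1, i2, i3) * Y (j1, j2, j3) * mc H i3 j3 c))"
    by (simp add: A3_def t3mul_def sum_distrib_left mult_ac)
  also have "\<dots> = (\<Sum>i1\<in>UNIV. \<Sum>i2\<in>UNIV. \<Sum>i3\<in>UNIV. \<Sum>j1\<in>UNIV. \<Sum>j2\<in>UNIV. \<Sum>j3\<in>UNIV. \<Sum>a\<in>UNIV. \<Sum>b\<in>UNIV.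
      (mc H i1 j1 a * \<alpha> a) * (mc H i2 j2 b * \<beta> b) * (X (i1, i2, i3) * Y (j1, j2, j3) * mc H i3 j3 c))"
    by (rule push2_6)
  also have "\<dots> = (\<Sum>i1\<in>UNIV. \<Sum>i2\<in>UNIV. \<Sum>i3\<in>UNIV. \<Sum>j1\<in>UNIV. \<Sum>j2\<in>UNIV. \<Sum>j3\<in>UNIV.
      (X (i1, i2, i3) * Y (j1, j2, j3) * mc H i3 j3 c) * ((\<alpha> i1 * \<alpha> j1) * (\<beta> i2 * \<beta> j2)))"
    by (simp only: sep2 multfD[OF assms(1)] multfD[OF assms(2)])
  also have "\<dots> = (\<Sum>i3\<in>UNIV. \<Sum>j3\<in>UNIV. \<Sum>j1\<in>UNIV. \<Sum>i1\<in>UNIV. \<Sum>i2\<in>UNIV. \<Sum>j2\<in>UNIV.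
      (X (i1, i2, i3) * Y (j1, j2, j3) * mc H i3 j3 c) * ((\<alpha> i1 * \<alpha> j1) * (\<beta> i2 * \<beta> j2)))"
    by (rule permA3)
  also have "\<dots> = hmul H (A3 \<alpha> \<beta> X) (A3 \<alpha> \<beta> Y) c"
    by (simp add: hmul_def A3_def sum_distrib_left sum_distrib_right mult_ac)
  finally show "A3 \<alpha> \<beta> (t3mul H X Y) c = hmul H (A3 \<alpha> \<beta> X) (A3 \<alpha> \<beta> Y) c" .
qed

lemma B3_t3mul:
  assumes "multf H \<alpha>"
  shows "B3 \<alpha> (t3mul H X Y) = tmul H (B3 \<alpha> X) (B3 \<alpha> Y)"
proof (rule ext, clarify)
  fix k2 k3
  have "B3 \<alpha> (t3mul H X Y) (k2, k3) = (\<Sum>a\<in>UNIV. \<Sum>i1\<in>UNIV. \<Sum>i2\<in>UNIV. \<Sum>i3\<in>UNIV. \<Sum>j1\<in>UNIV. \<Sum>j2\<in>UNIV. \<Sum>j3\<in>UNIV.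
      (mc H i1 j1 a * \<alpha> a) * (X (i1, i2, i3) * Y (j1, j2, j3) * mc H i2 j2 k2 * mc H i3 j3 k3))"
    by (simp add: B3_def t3mul_def sum_distrib_left mult_ac)
  also have "\<dots> = (\<Sum>i1\<in>UNIV. \<Sum>i2\<in>UNIV. \<Sum>i3\<in>UNIV. \<Sum>j1\<in>UNIV. \<Sum>j2\<in>UNIV. \<Sum>j3\<in>UNIV. \<Sum>a\<in>UNIV.
      (mc H i1 j1 a * \<alpha> a) * (X (i1, i2, i3) * Y (j1, j2, j3) * mc H i2 j2 k2 * mc H i3 j3 k3))"
    by (rule push1_6)
  also have "\<dots> = (\<Sum>i1\<in>UNIV. \<Sum>i2\<in>UNIV. \<Sum>i3\<in>UNIV. \<Sum>j1\<in>UNIV. \<Sum>j2\<in>UNIV. \<Sum>j3\<in>UNIV.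
      (\<alpha> i1 * \<alpha> j1) * (X (i1, i2, i3) * Y (j1, j2, j3) * mc H i2 j2 k2 * mc H i3 j3 k3))"
    by (simp only: sum_distrib_right[symmetric] multfD[OF assms(1)])
  also have "\<dots> = (\<Sum>i2\<in>UNIV. \<Sum>i3\<in>UNIV. \<Sum>j2\<in>UNIV. \<Sum>j3\<in>UNIV. \<Sum>j1\<in>UNIV. \<Sum>i1\<in>UNIV.
      (\<alpha> i1 * \<alpha> j1) * (X (i1, i2, i3) * Y (j1, j2, j3) * mc H i2 j2 k2 * mc H i3 j3 k3))"
    by (rule permB3)
  also have "\<dots> = tmul H (B3 \<alpha> X) (B3 \<alpha> Y) (k2, k3)"
    by (simp add: tmul_def B3_def sum_distrib_left sum_distrib_right mult_ac)
  finally show "B3 \<alpha> (t3mul H X Y) (k2, k3) = tmul H (B3 \<alpha> X) (B3 \<alpha> Y) (k2, k3)" .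
qed

lemma C3_t3mul:
  assumes "multf H \<alpha>"
  shows "C3 \<alpha> (t3mul H X Y) = tmul H (C3 \<alpha> X) (C3 \<alpha> Y)"
proof (rule ext, clarify)
  fix k1 k2
  have "C3 \<alpha> (t3mul H X Y) (k1, k2) = (\<Sum>a\<in>UNIV. \<Sum>i1\<in>UNIV. \<Sum>i2\<in>UNIV. \<Sum>i3\<in>UNIV. \<Sum>j1\<in>UNIV. \<Sum>j2\<in>UNIV. \<Sum>j3\<in>UNIV.
      (mc H i3 j3 a * \<alpha> a) * (X (i1, i2, i3) * Y (j1, j2, j3) * mc H i1 j1 k1 * mc H i2 j2 k2))"
    by (simp add: C3_def t3mul_def sum_distrib_left sum_distrib_right mult_ac)
  also have "\<dots> = (\<Sum>i1\<in>UNIV. \<Sum>i2\<in>UNIV. \<Sum>i3\<in>UNIV. \<Sum>j1\<in>UNIV. \<Sum>j2\<in>UNIV. \<Sum>j3\<in>UNIV. \<Sum>a\<in>UNIV.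
      (mc H i3 j3 a * \<alpha> a) * (X (i1, i2, i3) * Y (j1, j2, j3) * mc H i1 j1 k1 * mc H i2 j2 k2))"
    by (rule push1_6)
  also have "\<dots> = (\<Sum>i1\<in>UNIV. \<Sum>i2\<in>UNIV. \<Sum>i3\<in>UNIV. \<Sum>j1\<in>UNIV. \<Sum>j2\<in>UNIV. \<Sum>j3\<in>UNIV.
      (\<alpha> i3 * \<alpha> j3) * (X (i1, i2, i3) * Y (j1, j2, j3) * mc H i1 j1 k1 * mc H i2 j2 k2))"
    by (simp only: sum_distrib_right[symmetric] multfD[OF assms(1)])
  also have "\<dots> = (\<Sum>i1\<in>UNIV. \<Sum>i2\<in>UNIV. \<Sum>j1\<in>UNIV. \<Sum>j2\<in>UNIV. \<Sum>j3\<in>UNIV. \<Sum>i3\<in>UNIV.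
      (\<alpha> i3 * \<alpha> j3) * (X (i1, i2, i3) * Y (j1, j2, j3) * mc H i1 j1 k1 * mc H i2 j2 k2))"
    by (rule permC3)
  also have "\<dots> = tmul H (C3 \<alpha> X) (C3 \<alpha> Y) (k1, k2)"
    by (simp add: tmul_def C3_def sum_distrib_left sum_distrib_right mult_ac)
  finally show "C3 \<alpha> (t3mul H X Y) (k1, k2) = tmul H (C3 \<alpha> X) (C3 \<alpha> Y) (k1, k2)" .
qed

lemma push1_2: "(\<Sum>k\<in>Sk. \<Sum>i\<in>Si. \<Sum>j\<in>Sj. F k i j) = (\<Sum>i\<in>Si. \<Sum>j\<in>Sj. \<Sum>k\<in>Sk. F k i j)"
  by (simp only: sum.swap[where A=Sk and B=Si] sum.swap[where A=Sk and B=Sj] sum.swap[where A=Sj and B=Si])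

lemma push2_1: "(\<Sum>a\<in>Sa. \<Sum>b\<in>Sb. \<Sum>i\<in>Si. F a b i) = (\<Sum>i\<in>Si. \<Sum>a\<in>Sa. \<Sum>b\<in>Sb. F a b i)"
  by (simp only: sum.swap[where A=Sa and B=Si] sum.swap[where A=Sb and B=Sa] sum.swap[where A=Sb and B=Si])

lemma hopfD:
  assumes "is_hopf H"
  shows "\<And>x y z. hmul H (hmul H x y) z = hmul H x (hmul H y z)"
    and "\<And>x. hmul H (un H) x = x" and "\<And>x. hmul H x (un H) = x"
    and "\<And>x. delta_id H (hcomul H x) = id_delta H (hcomul H x)"
    and "\<And>x. (\<lambda>c. \<Sum>a\<in>UNIV. hcomul H x (a, c) * cu H a) = x"
    and "\<And>x. (\<lambda>a. \<Sum>c\<in>UNIV. hcomul H x (a, c) * cu H c) = x"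
    and "\<And>x y. hcomul H (hmul H x y) = tmul H (hcomul H x) (hcomul H y)"
    and "hcomul H (un H) = tone H"
    and "\<And>x y. hcounit H (hmul H x y) = hcounit H x * hcounit H y"
    and "hcounit H (un H) = 1"
    and "\<And>x. (\<lambda>k. \<Sum>a\<in>UNIV. \<Sum>b\<in>UNIV. hcomul H x (a, b) * hmul H (hanti H (bvec a)) (bvec b) k)
            = (\<lambda>k. hcounit H x * un H k)"
  using assms unfolding is_hopf_def by auto

lemma dual_grouplikes_iff: "\<alpha> \<in> dual_grouplikes H \<longleftrightarrow> \<alpha> \<noteq> (\<lambda>_. 0) \<and> multf H \<alpha>"
proof -
  have "dcomul H \<alpha> = (\<lambda>(a, b). \<alpha> a * \<alpha> b) \<longleftrightarrow> multf H \<alpha>"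
    unfolding multf_def dcomul_def fun_eq_iff by (auto simp: mult.commute)
  then show ?thesis unfolding dual_grouplikes_def by auto
qed

lemma eval_hmul:
  assumes "multf H \<alpha>"
  shows "eval \<alpha> (hmul H x y) = eval \<alpha> x * eval \<alpha> y"
proof -
  have "eval \<alpha> (hmul H x y) = (\<Sum>k\<in>UNIV. \<Sum>i\<in>UNIV. \<Sum>j\<in>UNIV. (x i * y j) * (mc H i j k * \<alpha> k))"
    by (simp add: Defs.eval_def hmul_def sum_distrib_left mult_ac)
  also have "\<dots> = (\<Sum>i\<in>UNIV. \<Sum>j\<in>UNIV. \<Sum>k\<in>UNIV. (x i * y j) * (mc H i j k * \<alpha> k))"
    by (rule push1_2)
  also have "\<dots> = (\<Sum>i\<in>UNIV. \<Sum>j\<in>UNIV. (x i * y j) * (\<alpha> i * \<alpha> j))"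
    by (simp only: sum_distrib_left[symmetric] multfD[OF assms])
  also have "\<dots> = eval \<alpha> x * eval \<alpha> y"
    by (simp add: Defs.eval_def sum_product mult_ac)
  finally show ?thesis .
qed

lemma eval_bvec: "eval \<alpha> (bvec a) = \<alpha> a"
  by (simp add: Defs.eval_def bvec_def if_distrib cong: if_cong)

lemma eval_un:
  assumes "is_hopf H" "\<alpha> \<in> dual_grouplikes H"
  shows "eval \<alpha> (un H) = 1"
proof -
  from assms(2) have nz: "\<alpha> \<noteq> (\<lambda>_. 0)" and m: "multf H \<alpha>" by (auto simp: dual_grouplikes_iff)
  then obtain a where a: "\<alpha> a \<noteq> 0" by auto
  have "\<alpha> a = eval \<alpha> (hmul H (un H) (bvec a))" using hopfD(2)[OF assms(1)] by (simp add: eval_bvec)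
  also have "\<dots> = eval \<alpha> (un H) * \<alpha> a" by (simp add: eval_hmul[OF m] eval_bvec)
  finally show ?thesis using a by simp
qed

lemma A3_leg13: "A3 \<alpha> \<beta> (leg13 H R) = (\<lambda>c. eval \<beta> (un H) * Lf \<alpha> R c)"
  apply (simp add: A3_def leg13_def Defs.eval_def Lf_def sum_product mult_ac)
  apply (rule ext, rule trans[OF sum.swap])
  apply (simp add: mult_ac)
  done

lemma A3_leg23: "A3 \<alpha> \<beta> (leg23 H R) = (\<lambda>c. eval \<alpha> (un H) * Lf \<beta> R c)"
  apply (simp add: A3_def leg23_def Defs.eval_def Lf_def sum_product mult_ac)
  apply (rule ext, rule trans[OF sum.swap])?
  apply (simp add: mult_ac)?
  done

lemma A3_delta_id: "A3 \<alpha> \<beta> (delta_id H R) = Lf (dmul H \<alpha> \<beta>) R"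
proof
  fix c
  have "A3 \<alpha> \<beta> (delta_id H R) c = (\<Sum>a\<in>UNIV. \<Sum>b\<in>UNIV. \<Sum>i\<in>UNIV. (dc H i a b * \<alpha> a * \<beta> b) * R (i, c))"
    by (simp add: A3_def delta_id_def sum_distrib_left mult_ac)
  also have "\<dots> = (\<Sum>i\<in>UNIV. \<Sum>a\<in>UNIV. \<Sum>b\<in>UNIV. (dc H i a b * \<alpha> a * \<beta> b) * R (i, c))"
    by (rule push2_1)
  also have "\<dots> = Lf (dmul H \<alpha> \<beta>) R c"
    by (simp add: Lf_def dmul_def sum_distrib_right)
  finally show "A3 \<alpha> \<beta> (delta_id H R) c = Lf (dmul H \<alpha> \<beta>) R c" .
qed

lemma B3_id_delta: "B3 \<alpha> (id_delta H R) = hcomul H (Lf \<alpha> R)"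
proof (rule ext, clarify)
  fix a b
  have "B3 \<alpha> (id_delta H R) (a, b) = (\<Sum>k\<in>UNIV. \<Sum>i\<in>UNIV. (\<alpha> k * R (k, i)) * dc H i a b)"
    by (simp add: B3_def id_delta_def sum_distrib_left mult_ac)
  also have "\<dots> = (\<Sum>i\<in>UNIV. \<Sum>k\<in>UNIV. (\<alpha> k * R (k, i)) * dc H i a b)"
    by (rule sum.swap)
  also have "\<dots> = hcomul H (Lf \<alpha> R) (a, b)"
    by (simp add: hcomul_def Lf_def sum_distrib_right)
  finally show "B3 \<alpha> (id_delta H R) (a, b) = hcomul H (Lf \<alpha> R) (a, b)" .
qed


lemma permla1: "(\<Sum>a0\<in>Sa0. \<Sum>i\<in>Si. \<Sum>a\<in>Sa. F a0 i a) = (\<Sum>a\<in>Sa. \<Sum>a0\<in>Sa0. \<Sum>i\<in>Si. F a0 i a)"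
  by (simp only: sum.swap[where A=Sa0 and B=Sa] sum.swap[where A=Si and B=Sa0] sum.swap[where A=Si and B=Sa])

lemma permla2: "(\<Sum>a\<in>Sa. \<Sum>a0\<in>Sa0. \<Sum>i\<in>Si. F a a0 i) = (\<Sum>i\<in>Si. \<Sum>a\<in>Sa. \<Sum>a0\<in>Sa0. F a a0 i)"
  by (simp only: sum.swap[where A=Sa and B=Si] sum.swap[where A=Sa0 and B=Sa] sum.swap[where A=Sa0 and B=Si])

lemma if01: "(if P then 1 else 0) * (y::'a::semiring_1) = (if P then y else 0)"
  "y * (if P then 1 else 0) = (if P then y else 0)" by simp_all

lemma C3_delta_id: "C3 \<alpha> (delta_id H R) = hcomul H (Rf \<alpha> R)"
proof (rule ext, clarify)
  fix a b
  have "C3 \<alpha> (delta_id H R) (a, b) = (\<Sum>c\<in>UNIV. \<Sum>i\<in>UNIV. (R (i, c) * \<alpha> c) * dc H i a b)"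
    by (simp add: C3_def delta_id_def sum_distrib_right sum_distrib_left mult_ac)
  also have "\<dots> = (\<Sum>i\<in>UNIV. \<Sum>c\<in>UNIV. (R (i, c) * \<alpha> c) * dc H i a b)"
    by (rule sum.swap)
  also have "\<dots> = hcomul H (Rf \<alpha> R) (a, b)"
    by (simp add: hcomul_def Rf_def sum_distrib_right)
  finally show "C3 \<alpha> (delta_id H R) (a, b) = hcomul H (Rf \<alpha> R) (a, b)" .
qed

lemma B3_leg13: "B3 \<alpha> (leg13 H R) = (\<lambda>(a, b). un H a * Lf \<alpha> R b)"
  by (rule ext, clarify) (simp add: B3_def leg13_def Lf_def sum_distrib_left mult_ac)
lemma B3_leg12: "B3 \<alpha> (leg12 H R) = (\<lambda>(a, b). Lf \<alpha> R a * un H b)"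
  by (rule ext, clarify) (simp add: B3_def leg12_def Lf_def sum_distrib_left sum_distrib_right mult_ac)
lemma C3_leg13: "C3 \<alpha> (leg13 H R) = (\<lambda>(a, b). Rf \<alpha> R a * un H b)"
  by (rule ext, clarify) (simp add: C3_def leg13_def Rf_def sum_distrib_left sum_distrib_right mult_ac)
lemma C3_leg23: "C3 \<alpha> (leg23 H R) = (\<lambda>(a, b). un H a * Rf \<alpha> R b)"
  by (rule ext, clarify) (simp add: C3_def leg23_def Rf_def sum_distrib_left mult_ac)
lemma Lf_tone: "Lf \<alpha> (tone H) = (\<lambda>c. eval \<alpha> (un H) * un H c)"
  by (simp add: Lf_def tone_def Defs.eval_def sum_distrib_left sum_distrib_right mult_ac)
lemma Rf_tone: "Rf \<alpha> (tone H) = (\<lambda>c. eval \<alpha> (un H) * un H c)"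
  by (simp add: Rf_def tone_def Defs.eval_def sum_distrib_left mult_ac)
lemma Lf_flip: "Lf \<alpha> (flip X) = Rf \<alpha> X"
  by (simp add: Lf_def Rf_def flip_def mult_ac)
lemma Rf_flip: "Rf \<alpha> (flip X) = Lf \<alpha> X"
  by (simp add: Lf_def Rf_def flip_def mult_ac)
lemma hcomul_bvec: "hcomul H (bvec k) = (\<lambda>(a, b). dc H k a b)"
  by (rule ext, clarify) (simp add: hcomul_def bvec_def if01)

lemma Lf_cu:
  assumes "is_hopf H"
  shows "Lf (cu H) (hcomul H h) = h"
proof -
  have "Lf (cu H) (hcomul H h) = (\<lambda>c. \<Sum>a\<in>UNIV. hcomul H h (a, c) * cu H a)"
    by (simp add: Lf_def mult.commute)
  then show ?thesis using hopfD(5)[OF assms] by simp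
qed

lemma la_comp:
  assumes "delta_id H X = id_delta H X"
  shows "Lf \<alpha> (hcomul H (Lf \<beta> X)) = Lf (dmul H \<beta> \<alpha>) X"
proof
  fix c
  have "Lf \<alpha> (hcomul H (Lf \<beta> X)) c = (\<Sum>a0\<in>UNIV. \<Sum>i\<in>UNIV. \<Sum>a\<in>UNIV. (\<beta> a * \<alpha> a0) * (X (a, i) * dc H i a0 c))"
    by (simp add: Lf_def hcomul_def sum_distrib_left sum_distrib_right mult_ac)
  also have "\<dots> = (\<Sum>a\<in>UNIV. \<Sum>a0\<in>UNIV. \<Sum>i\<in>UNIV. (\<beta> a * \<alpha> a0) * (X (a, i) * dc H i a0 c))"
    by (rule permla1)
  also have "\<dots> = (\<Sum>a\<in>UNIV. \<Sum>a0\<in>UNIV. (\<beta> a * \<alpha> a0) * id_delta H X (a, a0, c))"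
    by (simp add: id_delta_def sum_distrib_left)
  also have "\<dots> = (\<Sum>a\<in>UNIV. \<Sum>a0\<in>UNIV. (\<beta> a * \<alpha> a0) * delta_id H X (a, a0, c))"
    by (simp add: assms)
  also have "\<dots> = (\<Sum>a\<in>UNIV. \<Sum>a0\<in>UNIV. \<Sum>i\<in>UNIV. (\<beta> a * \<alpha> a0) * (X (i, c) * dc H i a a0))"
    by (simp add: delta_id_def sum_distrib_left)
  also have "\<dots> = (\<Sum>i\<in>UNIV. \<Sum>a\<in>UNIV. \<Sum>a0\<in>UNIV. (\<beta> a * \<alpha> a0) * (X (i, c) * dc H i a a0))"
    by (rule permla2)
  also have "\<dots> = Lf (dmul H \<beta> \<alpha>) X c"
    by (simp add: Lf_def dmul_def sum_distrib_left sum_distrib_right mult_ac)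
  finally show "Lf \<alpha> (hcomul H (Lf \<beta> X)) c = Lf (dmul H \<beta> \<alpha>) X c" .
qed

lemma permde: "(\<Sum>d\<in>Sd. \<Sum>c\<in>Sc. \<Sum>k\<in>Sk. F d c k) = (\<Sum>k\<in>Sk. \<Sum>c\<in>Sc. \<Sum>d\<in>Sd. F d c k)"
  by (simp only: sum.swap[where A=Sd and B=Sc] sum.swap[where A=Sd and B=Sk] sum.swap[where A=Sc and B=Sk])

lemma dmul_eval: "eval \<beta> (Lf \<alpha> (hcomul H x)) = (\<Sum>k\<in>UNIV. x k * dmul H \<alpha> \<beta> k)"
proof -
  have "eval \<beta> (Lf \<alpha> (hcomul H x)) = (\<Sum>d\<in>UNIV. \<Sum>c\<in>UNIV. \<Sum>k\<in>UNIV. x k * (dc H k c d * \<alpha> c * \<beta> d))"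
    by (simp add: Defs.eval_def Lf_def hcomul_def sum_distrib_left sum_distrib_right mult_ac)
  also have "\<dots> = (\<Sum>k\<in>UNIV. \<Sum>c\<in>UNIV. \<Sum>d\<in>UNIV. x k * (dc H k c d * \<alpha> c * \<beta> d))"
    by (rule permde)
  also have "\<dots> = (\<Sum>k\<in>UNIV. x k * dmul H \<alpha> \<beta> k)"
    by (simp add: dmul_def sum_distrib_left)
  finally show ?thesis .
qed

lemma eval_comm: "eval \<gamma> y = (\<Sum>j\<in>UNIV. y j * \<gamma> j)"
  by (simp add: Defs.eval_def mult.commute)

lemma sum_bvec: "(\<Sum>k\<in>UNIV. bvec (a::'b::finite) k * f k) = (f a :: 'k::field)"
  by (simp add: bvec_def if01 sum.delta sum.delta')

lemma dmul_eval_bvec: "dmul H \<alpha> \<beta> k = eval \<beta> (Lf \<alpha> (hcomul H (bvec k)))"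
  by (simp add: dmul_eval sum_bvec)

lemma dmul_assoc:
  assumes "is_hopf H"
  shows "dmul H (dmul H f g) h = dmul H f (dmul H g h)"
proof
  fix k
  have "dmul H f (dmul H g h) k = eval (dmul H g h) (Lf f (hcomul H (bvec k)))"
    by (rule dmul_eval_bvec)
  also have "\<dots> = eval h (Lf g (hcomul H (Lf f (hcomul H (bvec k)))))"
    by (simp only: eval_comm[of "dmul H g h"] dmul_eval[symmetric])
  also have "\<dots> = eval h (Lf (dmul H f g) (hcomul H (bvec k)))"
    by (simp add: la_comp hopfD(4)[OF assms])
  also have "\<dots> = dmul H (dmul H f g) h k"
    by (simp add: dmul_eval_bvec)
  finally show "dmul H (dmul H f g) h k = dmul H f (dmul H g h) k" ..
qed

lemma hmul_bvec: "hmul H (bvec a) (bvec b) = mc H a b"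
proof
  fix k
  have "hmul H (bvec a) (bvec b) k = (\<Sum>i\<in>UNIV. bvec a i * (\<Sum>j\<in>UNIV. bvec b j * mc H i j k))"
    by (simp add: hmul_def sum_distrib_left mult_ac)
  then show "hmul H (bvec a) (bvec b) k = mc H a b k" by (simp add: sum_bvec)
qed

lemma multf_dmul:
  assumes "is_hopf H" "multf H \<alpha>" "multf H \<beta>"
  shows "multf H (dmul H \<alpha> \<beta>)"
  unfolding multf_def
proof (intro allI)
  fix a b
  have "(\<Sum>k\<in>UNIV. mc H a b k * dmul H \<alpha> \<beta> k) = eval \<beta> (Lf \<alpha> (hcomul H (hmul H (bvec a) (bvec b))))"
    by (simp add: dmul_eval hmul_bvec)
  also have "\<dots> = eval \<beta> (hmul H (Lf \<alpha> (hcomul H (bvec a))) (Lf \<alpha> (hcomul H (bvec b))))"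
    by (simp add: hopfD(7)[OF assms(1)] Lf_tmul[OF assms(2)])
  also have "\<dots> = dmul H \<alpha> \<beta> a * dmul H \<alpha> \<beta> b"
    by (simp add: eval_hmul[OF assms(3)] dmul_eval_bvec)
  finally show "(\<Sum>k\<in>UNIV. mc H a b k * dmul H \<alpha> \<beta> k) = dmul H \<alpha> \<beta> a * dmul H \<alpha> \<beta> b" .
qed

lemma dmul_un:
  assumes "is_hopf H" "\<alpha> \<in> dual_grouplikes H" "\<beta> \<in> dual_grouplikes H"
  shows "eval (dmul H \<alpha> \<beta>) (un H) = 1"
proof -
  have "eval (dmul H \<alpha> \<beta>) (un H) = eval \<beta> (Lf \<alpha> (hcomul H (un H)))"
    by (simp only: eval_comm[of "dmul H \<alpha> \<beta>"] dmul_eval[symmetric])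
  also have "\<dots> = eval \<beta> (un H)"
    by (simp add: hopfD(8)[OF assms(1)] Lf_tone eval_un[OF assms(1,2)])
  also have "\<dots> = 1"
    by (rule eval_un[OF assms(1,3)])
  finally show ?thesis .
qed

lemma dmul_closed:
  assumes "is_hopf H" "\<alpha> \<in> dual_grouplikes H" "\<beta> \<in> dual_grouplikes H"
  shows "dmul H \<alpha> \<beta> \<in> dual_grouplikes H"
proof -
  have "dmul H \<alpha> \<beta> \<noteq> (\<lambda>_. 0)"
    using dmul_un[OF assms] by (auto simp: Defs.eval_def)
  moreover have "multf H (dmul H \<alpha> \<beta>)"
    using assms by (intro multf_dmul) (auto simp: dual_grouplikes_iff)
  ultimately show ?thesis by (simp add: dual_grouplikes_iff)
qed

lemma counit_col:
  assumes "is_hopf H"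
  shows "(\<Sum>a\<in>UNIV. dc H k a c * cu H a) = bvec k c" "(\<Sum>c\<in>UNIV. dc H k a c * cu H c) = bvec k a"
proof -
  from fun_cong[OF hopfD(5)[OF assms, of "bvec k"], of c]
  show "(\<Sum>a\<in>UNIV. dc H k a c * cu H a) = bvec k c" by (simp add: hcomul_bvec)
  from fun_cong[OF hopfD(6)[OF assms, of "bvec k"], of a]
  show "(\<Sum>c\<in>UNIV. dc H k a c * cu H c) = bvec k a" by (simp add: hcomul_bvec)
qed

lemma dmul_cu_left:
  assumes "is_hopf H"
  shows "dmul H (cu H) f = f"
proof
  fix k
  have "dmul H (cu H) f k = (\<Sum>b\<in>UNIV. (\<Sum>a\<in>UNIV. dc H k a b * cu H a) * f b)"
    unfolding dmul_def by (subst sum.swap) (simp add: sum_distrib_left sum_distrib_right mult_ac)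
  then show "dmul H (cu H) f k = f k" by (simp add: counit_col[OF assms] sum_bvec)
qed

lemma dmul_cu_right:
  assumes "is_hopf H"
  shows "dmul H f (cu H) = f"
proof
  fix k
  have "dmul H f (cu H) k = (\<Sum>a\<in>UNIV. (\<Sum>b\<in>UNIV. dc H k a b * cu H b) * f a)"
    by (simp add: dmul_def sum_distrib_left sum_distrib_right mult_ac)
  then show "dmul H f (cu H) k = f k" by (simp add: counit_col[OF assms] sum_bvec)
qed

lemma cu_grouplike:
  assumes "is_hopf H"
  shows "cu H \<in> dual_grouplikes H"
proof -
  have m: "multf H (cu H)"
    unfolding multf_def
  proof (intro allI)
    fix a b
    have "hcounit H (hmul H (bvec a) (bvec b)) = hcounit H (bvec a) * hcounit H (bvec b)"
      by (rule hopfD(9)[OF assms])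
    then show "(\<Sum>k\<in>UNIV. mc H a b k * cu H k) = cu H a * cu H b"
      by (simp add: hmul_bvec hcounit_def sum_bvec)
  qed
  have "cu H \<noteq> (\<lambda>_. 0)" using hopfD(10)[OF assms] by (auto simp: hcounit_def)
  with m show ?thesis by (simp add: dual_grouplikes_iff)
qed


lemma permev: "(\<Sum>j\<in>Sj. \<Sum>a\<in>Sa. \<Sum>b\<in>Sb. F j a b) = (\<Sum>a\<in>Sa. \<Sum>b\<in>Sb. \<Sum>j\<in>Sj. F j a b)"
  by (simp only: sum.swap[where A=Sj and B=Sa] sum.swap[where A=Sj and B=Sb] sum.swap[where A=Sb and B=Sa])

lemma eval_sum2: "eval \<alpha> (\<lambda>j. \<Sum>a\<in>UNIV. \<Sum>b\<in>UNIV. c a b * F a b j) = (\<Sum>a\<in>UNIV. \<Sum>b\<in>UNIV. c a b * eval \<alpha> (F a b))"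
proof -
  have "eval \<alpha> (\<lambda>j. \<Sum>a\<in>UNIV. \<Sum>b\<in>UNIV. c a b * F a b j) = (\<Sum>j\<in>UNIV. \<Sum>a\<in>UNIV. \<Sum>b\<in>UNIV. \<alpha> j * (c a b * F a b j))"
    by (simp add: Defs.eval_def sum_distrib_left)
  also have "\<dots> = (\<Sum>a\<in>UNIV. \<Sum>b\<in>UNIV. \<Sum>j\<in>UNIV. \<alpha> j * (c a b * F a b j))"
    by (rule permev)
  also have "\<dots> = (\<Sum>a\<in>UNIV. \<Sum>b\<in>UNIV. c a b * eval \<alpha> (F a b))"
    by (simp add: Defs.eval_def sum_distrib_left mult_ac)
  finally show ?thesis .
qed

lemma sum_fun_apply: "(\<Sum>v\<in>S. f v) i = (\<Sum>v\<in>S. f v i :: 'a::comm_monoid_add)"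
  by (induction S rule: infinite_finite_induct) (auto simp: zero_fun_def plus_fun_def)

definition linv :: "('b::finite, 'k::field) hopf_sc \<Rightarrow> ('b \<Rightarrow> 'k) \<Rightarrow> 'b \<Rightarrow> 'k" where
  "linv H \<alpha> = (\<lambda>a. eval \<alpha> (hanti H (bvec a)))"

lemma linv_dmul:
  assumes "is_hopf H" "\<alpha> \<in> dual_grouplikes H"
  shows "dmul H (linv H \<alpha>) \<alpha> = cu H"
proof
  fix k
  have m: "multf H \<alpha>" using assms(2) by (simp add: dual_grouplikes_iff)
  have ax: "(\<lambda>j. \<Sum>a\<in>UNIV. \<Sum>b\<in>UNIV. dc H k a b * hmul H (hanti H (bvec a)) (bvec b) j) = (\<lambda>j. hcounit H (bvec k) * un H j)"
    using hopfD(11)[OF assms(1), of "bvec k"] by (simp add: hcomul_bvec)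
  have "dmul H (linv H \<alpha>) \<alpha> k = (\<Sum>a\<in>UNIV. \<Sum>b\<in>UNIV. dc H k a b * eval \<alpha> (hmul H (hanti H (bvec a)) (bvec b)))"
    by (simp add: dmul_def linv_def eval_hmul[OF m] eval_bvec mult_ac)
  also have "\<dots> = eval \<alpha> (\<lambda>j. hcounit H (bvec k) * un H j)"
    by (simp only: eval_sum2[symmetric] ax)
  also have "\<dots> = hcounit H (bvec k) * eval \<alpha> (un H)"
    by (simp add: Defs.eval_def sum_distrib_left mult_ac)
  also have "\<dots> = cu H k"
    by (simp add: eval_un[OF assms] hcounit_def sum_bvec)
  finally show "dmul H (linv H \<alpha>) \<alpha> k = cu H k" .
qed

lemma dedekind:
  assumes hopf: "is_hopf H"
  shows "finite S \<Longrightarrow> S \<subseteq> dual_grouplikes H \<Longrightarrow> (\<forall>x. (\<Sum>\<alpha>\<in>S. c \<alpha> * eval \<alpha> x) = 0) \<Longrightarrow> \<forall>\<alpha>\<in>S. c \<alpha> = 0"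
proof (induction S arbitrary: c rule: finite_induct)
  case empty
  then show ?case by simp
next
  case (insert \<beta> S)
  have bG: "\<beta> \<in> dual_grouplikes H" and SG: "S \<subseteq> dual_grouplikes H" using insert.prems by auto
  have mb: "multf H \<beta>" using bG by (simp add: dual_grouplikes_iff)
  have hyp: "(\<Sum>\<alpha>\<in>S. c \<alpha> * eval \<alpha> x) + c \<beta> * eval \<beta> x = 0" for x
    using insert.prems(2) insert.hyps by (simp add: add.commute)
  have zero: "\<forall>\<alpha>\<in>S. c \<alpha> * (eval \<alpha> y - eval \<beta> y) = 0" for y
  proof -
    have "(\<Sum>\<alpha>\<in>S. (c \<alpha> * (eval \<alpha> y - eval \<beta> y)) * eval \<alpha> x) = 0" for x
    proof -
      have "(\<Sum>\<alpha>\<in>S. (c \<alpha> * (eval \<alpha> y - eval \<beta> y)) * eval \<alpha> x)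
          = (\<Sum>\<alpha>\<in>S. c \<alpha> * eval \<alpha> (hmul H x y)) - eval \<beta> y * (\<Sum>\<alpha>\<in>S. c \<alpha> * eval \<alpha> x)"
        using SG by (simp add: eval_hmul dual_grouplikes_iff subset_iff sum_distrib_left sum_subtractf algebra_simps)
      also have "\<dots> = - (c \<beta> * eval \<beta> (hmul H x y)) + eval \<beta> y * (c \<beta> * eval \<beta> x)"
      proof -
        have s1: "(\<Sum>\<alpha>\<in>S. c \<alpha> * eval \<alpha> (hmul H x y)) = - (c \<beta> * eval \<beta> (hmul H x y))"
          using hyp[of "hmul H x y"] by (simp add: eq_neg_iff_add_eq_0)
        have s2: "(\<Sum>\<alpha>\<in>S. c \<alpha> * eval \<alpha> x) = - (c \<beta> * eval \<beta> x)"
          using hyp[of x] by (simp add: eq_neg_iff_add_eq_0)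
        show ?thesis by (simp add: s1 s2)
      qed
      also have "\<dots> = 0" by (simp add: eval_hmul[OF mb] algebra_simps)
      finally show ?thesis .
    qed
    then have "\<forall>x. (\<Sum>\<alpha>\<in>S. (c \<alpha> * (eval \<alpha> y - eval \<beta> y)) * eval \<alpha> x) = 0" by blast
    then show ?thesis using insert.IH[OF SG, of "\<lambda>\<alpha>. c \<alpha> * (eval \<alpha> y - eval \<beta> y)"] by simp
  qed
  have cS: "\<forall>\<alpha>\<in>S. c \<alpha> = 0"
  proof
    fix \<alpha> assume aS: "\<alpha> \<in> S"
    then have "\<alpha> \<noteq> \<beta>" using insert.hyps by auto
    then obtain a where a: "\<alpha> a \<noteq> \<beta> a" by auto
    from zero[of "bvec a"] aS a show "c \<alpha> = 0" by (auto simp: eval_bvec)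
  qed
  have "c \<beta> * eval \<beta> (un H) = 0" using hyp[of "un H"] cS by simp
  then have "c \<beta> = 0" by (simp add: eval_un[OF hopf bG])
  with cS show ?case by simp
qed

lemma finite_dual_grouplikes:
  fixes H :: "('b::finite, 'k::field) hopf_sc"
  assumes hopf: "is_hopf H"
  shows "finite (dual_grouplikes H)"
proof -
  interpret V: vector_space "\<lambda>(c::'k) (f::'b \<Rightarrow> 'k). (\<lambda>i. c * f i)"
    by unfold_locales (auto simp: fun_eq_iff algebra_simps)
  have ind: "V.independent (dual_grouplikes H)"
    unfolding V.independent_explicit_finite_subsets
  proof (intro allI impI ballI)
    fix S u v
    assume S: "S \<subseteq> dual_grouplikes H" "finite S" and sum0: "(\<Sum>v\<in>S. (\<lambda>i. u v * v i)) = 0" and vS: "v \<in> S"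
    have pt: "(\<Sum>v\<in>S. u v * v i) = 0" for i
      using fun_cong[OF sum0, of i] by (simp add: sum_fun_apply)
    have "\<forall>x. (\<Sum>\<alpha>\<in>S. u \<alpha> * eval \<alpha> x) = 0"
    proof
      fix x
      have "(\<Sum>\<alpha>\<in>S. u \<alpha> * eval \<alpha> x) = (\<Sum>i\<in>UNIV. x i * (\<Sum>\<alpha>\<in>S. u \<alpha> * \<alpha> i))"
        by (simp add: Defs.eval_def sum_distrib_left mult_ac sum.swap[of _ S])
      then show "(\<Sum>\<alpha>\<in>S. u \<alpha> * eval \<alpha> x) = 0" by (simp add: pt)
    qed
    then show "u v = 0" using dedekind[OF hopf S(2) S(1)] vS by blast
  qed
  have sp: "dual_grouplikes H \<subseteq> V.span (range bvec)"
  proof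
    fix f :: "'b \<Rightarrow> 'k"
    have "f = (\<Sum>i\<in>UNIV. (\<lambda>j. f i * bvec i j))"
      by (rule ext) (simp add: sum_fun_apply bvec_def if01 sum.delta sum.delta')
    moreover have "(\<Sum>i\<in>UNIV. (\<lambda>j. f i * bvec i j)) \<in> V.span (range bvec)"
      by (intro V.span_sum V.span_scale V.span_base) auto
    ultimately show "f \<in> V.span (range bvec)" by simp
  qed
  show ?thesis using V.independent_span_bound[OF _ ind sp] by simp
qed

definition dgroup :: "('b::finite, 'k::field) hopf_sc \<Rightarrow> ('b \<Rightarrow> 'k) monoid" where
  "dgroup H = \<lparr>carrier = dual_grouplikes H, mult = dmul H, one = cu H\<rparr>"

lemma dgroup_monoid:
  assumes "is_hopf H"
  shows "monoid (dgroup H)"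
  by (rule monoidI) (auto simp: dgroup_def dmul_closed[OF assms] cu_grouplike[OF assms] dmul_assoc[OF assms] dmul_cu_left[OF assms] dmul_cu_right[OF assms])

lemma dgroup_group:
  fixes H :: "('b::finite, 'k::field) hopf_sc"
  assumes hopf: "is_hopf H"
  shows "group (dgroup H)"
proof -
  interpret M: monoid "dgroup H" by (rule dgroup_monoid[OF hopf])
  have fin: "finite (carrier (dgroup H))" by (simp add: dgroup_def finite_dual_grouplikes[OF hopf])
  have cancel: "\<And>m a b. x \<in> carrier (dgroup H) \<Longrightarrow> dmul H (x [^]\<^bsub>dgroup H\<^esub> (m::nat)) a = dmul H (x [^]\<^bsub>dgroup H\<^esub> m) b \<Longrightarrow> a = b" for x
  proof -
    fix m :: nat and a b
    assume xc: "x \<in> carrier (dgroup H)"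
    then have xG: "x \<in> dual_grouplikes H" by (simp add: dgroup_def)
    have c1: "dmul H x a = dmul H x b \<Longrightarrow> a = b" for a b
    proof -
      assume "dmul H x a = dmul H x b"
      then have "dmul H (linv H x) (dmul H x a) = dmul H (linv H x) (dmul H x b)" by simp
      then show "a = b" by (simp add: dmul_assoc[OF hopf, symmetric] linv_dmul[OF hopf xG] dmul_cu_left[OF hopf])
    qed
    show "dmul H (x [^]\<^bsub>dgroup H\<^esub> m) a = dmul H (x [^]\<^bsub>dgroup H\<^esub> m) b \<Longrightarrow> a = b"
    proof (induction m arbitrary: a b)
      case 0
      then show ?case by (simp add: dgroup_def dmul_cu_left[OF hopf])
    next
      case (Suc m)
      from Suc.prems have "dmul H (x [^]\<^bsub>dgroup H\<^esub> m) (dmul H x a) = dmul H (x [^]\<^bsub>dgroup H\<^esub> m) (dmul H x b)"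
        by (simp add: dmul_assoc[OF hopf] del: nat_pow_Suc) (simp add: dgroup_def dmul_assoc[OF hopf])
      then have "dmul H x a = dmul H x b" by (rule Suc.IH)
      then show ?case by (rule c1)
    qed
  qed
  show ?thesis
  proof (rule groupI)
    fix x assume xc: "x \<in> carrier (dgroup H)"
    have "\<not> inj_on (\<lambda>n::nat. x [^]\<^bsub>dgroup H\<^esub> n) UNIV"
    proof
      assume "inj_on (\<lambda>n::nat. x [^]\<^bsub>dgroup H\<^esub> n) UNIV"
      moreover have "range (\<lambda>n::nat. x [^]\<^bsub>dgroup H\<^esub> n) \<subseteq> carrier (dgroup H)" using xc by auto
      ultimately have "finite (UNIV :: nat set)" using fin finite_imageD finite_subset by metis
      then show False by simp
    qed
    then obtain m n :: nat where mn: "m \<noteq> n" "x [^]\<^bsub>dgroup H\<^esub> m = x [^]\<^bsub>dgroup H\<^esub> n"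
      unfolding inj_on_def by blast
    have "\<exists>(m::nat) (d::nat). 0 < d \<and> x [^]\<^bsub>dgroup H\<^esub> m = x [^]\<^bsub>dgroup H\<^esub> (m + d)"
    proof (cases "m < n")
      case True
      then have "m + (n - m) = n" "0 < n - m" by auto
      then show ?thesis using mn by metis
    next
      case False
      then have "n + (m - n) = m" "0 < m - n" using mn by auto
      then show ?thesis using mn by metis
    qed
    then obtain m d :: nat where d: "0 < d" "x [^]\<^bsub>dgroup H\<^esub> m = x [^]\<^bsub>dgroup H\<^esub> (m + d)" by blast
    have "dmul H (x [^]\<^bsub>dgroup H\<^esub> m) (cu H) = dmul H (x [^]\<^bsub>dgroup H\<^esub> m) (x [^]\<^bsub>dgroup H\<^esub> d)"
      using d(2) M.nat_pow_mult[OF xc, of m d] M.nat_pow_closed[OF xc, of m]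
      by (simp add: dgroup_def dmul_cu_right[OF hopf])
    then have xd: "x [^]\<^bsub>dgroup H\<^esub> d = cu H" using cancel[OF xc] by metis
    show "\<exists>y\<in>carrier (dgroup H). y \<otimes>\<^bsub>dgroup H\<^esub> x = \<one>\<^bsub>dgroup H\<^esub>"
    proof (intro bexI)
      show "x [^]\<^bsub>dgroup H\<^esub> (d - 1) \<otimes>\<^bsub>dgroup H\<^esub> x = \<one>\<^bsub>dgroup H\<^esub>"
      proof -
        have "x [^]\<^bsub>dgroup H\<^esub> (d - 1) \<otimes>\<^bsub>dgroup H\<^esub> x = x [^]\<^bsub>dgroup H\<^esub> (Suc (d - 1))"
          by (simp only: nat_pow_Suc)
        also have "\<dots> = x [^]\<^bsub>dgroup H\<^esub> d" using d(1) by simp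
        finally show ?thesis using xd by (simp add: dgroup_def)
      qed
      show "x [^]\<^bsub>dgroup H\<^esub> (d - 1) \<in> carrier (dgroup H)" using xc by simp
    qed
  qed (auto simp: dgroup_def dmul_closed[OF hopf] cu_grouplike[OF hopf] dmul_assoc[OF hopf] dmul_cu_left[OF hopf])
qed


definition qt :: "('b::finite, 'k::field) hopf_sc \<Rightarrow> ('b \<times> 'b \<Rightarrow> 'k) \<Rightarrow> ('b \<times> 'b \<Rightarrow> 'k) \<Rightarrow> bool" where
  "qt H R R' \<longleftrightarrow> tmul H R R' = tone H \<and> tmul H R' R = tone H \<and>
     (\<forall>h. flip (hcomul H h) = tmul H (tmul H R (hcomul H h)) R') \<and>
     delta_id H R = t3mul H (leg13 H R) (leg23 H R) \<and>
     id_delta H R = t3mul H (leg13 H R) (leg12 H R)"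

lemma un_nonzero: "is_hopf H \<Longrightarrow> un H \<noteq> (\<lambda>_. 0)"
  using hopfD(10)[of H] by (auto simp: hcounit_def)

lemma hmul_zero: "hmul H (\<lambda>_. 0) x = (\<lambda>_. 0)"
  by (simp add: hmul_def)


context
  fixes H :: "('b::finite, 'k::field) hopf_sc" and R R' :: "'b \<times> 'b \<Rightarrow> 'k" and \<beta> :: "'b \<Rightarrow> 'k"
  assumes hopf: "is_hopf H" and q: "qt H R R'" and bG: "\<beta> \<in> dual_grouplikes H"
begin

lemma mb: "multf H \<beta>" using bG by (simp add: dual_grouplikes_iff)
lemma eb: "eval \<beta> (un H) = 1" by (rule eval_un[OF hopf bG])

lemma Q1: "hmul H (Lf \<beta> R) (Lf \<beta> R') = un H" "hmul H (Lf \<beta> R') (Lf \<beta> R) = un H"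
  using q by (simp_all add: qt_def Lf_tmul[OF mb, symmetric] Lf_tone eb)

lemma Q2: "hmul H (Rf \<beta> R) (Rf \<beta> R') = un H" "hmul H (Rf \<beta> R') (Rf \<beta> R) = un H"
  using q by (simp_all add: qt_def Rf_tmul[OF mb, symmetric] Rf_tone eb)

lemma Q3: "Rf \<beta> (hcomul H h) = hmul H (hmul H (Lf \<beta> R) (Lf \<beta> (hcomul H h))) (Lf \<beta> R')"
proof -
  have "Lf \<beta> (flip (hcomul H h)) = Lf \<beta> (tmul H (tmul H R (hcomul H h)) R')"
    using q by (simp add: qt_def)
  then show ?thesis by (simp add: Lf_flip Lf_tmul[OF mb])
qed

lemma Q4: "Lf \<beta> (hcomul H h) = hmul H (hmul H (Rf \<beta> R) (Rf \<beta> (hcomul H h))) (Rf \<beta> R')"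
proof -
  have "Rf \<beta> (flip (hcomul H h)) = Rf \<beta> (tmul H (tmul H R (hcomul H h)) R')"
    using q by (simp add: qt_def)
  then show ?thesis by (simp add: Rf_flip Rf_tmul[OF mb])
qed

lemma Q5: "hmul H (Rf \<beta> (hcomul H h)) (Lf \<beta> R) = hmul H (Lf \<beta> R) (Lf \<beta> (hcomul H h))"
  by (simp add: Q3 hopfD(1)[OF hopf] Q1 hopfD(3)[OF hopf])

lemma Q6: "hmul H (Lf \<beta> (hcomul H h)) (Rf \<beta> R) = hmul H (Rf \<beta> R) (Rf \<beta> (hcomul H h))"
  by (simp add: Q4 hopfD(1)[OF hopf] Q2 hopfD(3)[OF hopf])

lemma Q7: "hcomul H (Lf \<beta> R) = (\<lambda>(a, b). Lf \<beta> R a * Lf \<beta> R b)"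
proof -
  have "hcomul H (Lf \<beta> R) = B3 \<beta> (id_delta H R)" by (simp add: B3_id_delta)
  also have "\<dots> = tmul H (B3 \<beta> (leg13 H R)) (B3 \<beta> (leg12 H R))"
    using q by (simp add: qt_def B3_t3mul[OF mb])
  also have "\<dots> = (\<lambda>(a, b). Lf \<beta> R a * Lf \<beta> R b)"
    by (simp add: B3_leg13 B3_leg12 tmul_simple hopfD(2,3)[OF hopf])
  finally show ?thesis .
qed

lemma Q8: "hcomul H (Rf \<beta> R) = (\<lambda>(a, b). Rf \<beta> R a * Rf \<beta> R b)"
proof -
  have "hcomul H (Rf \<beta> R) = C3 \<beta> (delta_id H R)" by (simp add: C3_delta_id)
  also have "\<dots> = tmul H (C3 \<beta> (leg13 H R)) (C3 \<beta> (leg23 H R))"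
    using q by (simp add: qt_def C3_t3mul[OF mb])
  also have "\<dots> = (\<lambda>(a, b). Rf \<beta> R a * Rf \<beta> R b)"
    by (simp add: C3_leg13 C3_leg23 tmul_simple hopfD(2,3)[OF hopf])
  finally show ?thesis .
qed

lemma Q9: "Lf \<beta> R \<in> grouplikes H" "Rf \<beta> R \<in> grouplikes H"
proof -
  have "Lf \<beta> R \<noteq> (\<lambda>_. 0)" using Q1(1) un_nonzero[OF hopf] hmul_zero by metis
  then show "Lf \<beta> R \<in> grouplikes H" by (simp add: grouplikes_def Q7)
  have "Rf \<beta> R \<noteq> (\<lambda>_. 0)" using Q2(1) un_nonzero[OF hopf] hmul_zero by metis
  then show "Rf \<beta> R \<in> grouplikes H" by (simp add: grouplikes_def Q8)
qed

lemma Q10: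
  assumes gG: "\<gamma> \<in> dual_grouplikes H"
  shows "Lf (dmul H \<beta> \<gamma>) R = hmul H (Lf \<beta> R) (Lf \<gamma> R)"
proof -
  have mg: "multf H \<gamma>" using gG by (simp add: dual_grouplikes_iff)
  have "Lf (dmul H \<beta> \<gamma>) R = A3 \<beta> \<gamma> (delta_id H R)" by (simp add: A3_delta_id)
  also have "\<dots> = hmul H (A3 \<beta> \<gamma> (leg13 H R)) (A3 \<beta> \<gamma> (leg23 H R))"
    using q by (simp add: qt_def A3_t3mul[OF mb mg])
  also have "\<dots> = hmul H (Lf \<beta> R) (Lf \<gamma> R)"
    by (simp add: A3_leg13 A3_leg23 eb eval_un[OF hopf gG])
  finally show ?thesis .
qed

lemma Q12:
  assumes "Lf \<beta> R = un H"
  shows "\<beta> \<in> dual_center H"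
proof -
  have x': "Lf \<beta> R' = un H" using Q1(1) assms hopfD(2)[OF hopf] by simp
  have eq: "Rf \<beta> (hcomul H h) = Lf \<beta> (hcomul H h)" for h
    using Q3[of h] by (simp add: assms x' hopfD(2,3)[OF hopf])
  have "dmul H \<beta> g = dmul H g \<beta>" for g
  proof
    fix k
    have "dmul H g \<beta> k = eval g (Rf \<beta> (hcomul H (bvec k)))"
      by (simp add: dmul_def Defs.eval_def Rf_def hcomul_bvec sum_distrib_left mult_ac)
    then show "dmul H \<beta> g k = dmul H g \<beta> k" by (simp add: eq dmul_eval_bvec)
  qed
  then show ?thesis by (simp add: dual_center_def)
qed

lemma Q13:
  assumes gG: "\<gamma> \<in> dual_grouplikes H" and inv: "dmul H \<gamma> \<beta> = cu H"
  shows "hmul H (Rf \<beta> R) (Lf \<beta> R) \<in> center H"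
  unfolding center_def
proof (intro CollectI allI)
  fix w
  define h where "h = Lf \<gamma> (hcomul H w)"
  have w: "Lf \<beta> (hcomul H h) = w"
    unfolding h_def by (simp add: la_comp hopfD(4)[OF hopf] inv Lf_cu[OF hopf])
  let ?x = "Lf \<beta> R" and ?y = "Rf \<beta> R" and ?l = "Lf \<beta> (hcomul H h)" and ?r = "Rf \<beta> (hcomul H h)"
  have "hmul H (hmul H ?y ?x) ?l = hmul H ?y (hmul H ?r ?x)" by (simp add: hopfD(1)[OF hopf] Q5)
  also have "\<dots> = hmul H (hmul H ?l ?y) ?x" by (simp add: hopfD(1)[OF hopf, symmetric] Q6)
  also have "\<dots> = hmul H ?l (hmul H ?y ?x)" by (simp add: hopfD(1)[OF hopf])
  finally show "hmul H (hmul H ?y ?x) w = hmul H w (hmul H ?y ?x)" by (simp add: w)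
qed

lemma Q14: "hmul H (Rf \<beta> R) (Lf \<beta> R) \<in> grouplikes H"
proof -
  let ?x = "Lf \<beta> R" and ?y = "Rf \<beta> R" and ?x' = "Lf \<beta> R'" and ?y' = "Rf \<beta> R'"
  have "hmul H (hmul H ?y ?x) (hmul H ?x' ?y') = un H"
    by (simp add: hopfD(1)[OF hopf] Q1 Q2 hopfD(2)[OF hopf] flip: hopfD(1)[OF hopf, of ?x ?x'])
  then have nz: "hmul H ?y ?x \<noteq> (\<lambda>_. 0)" using un_nonzero[OF hopf] hmul_zero by metis
  have "hcomul H (hmul H ?y ?x) = (\<lambda>(a, b). hmul H ?y ?x a * hmul H ?y ?x b)"
    by (simp add: hopfD(7)[OF hopf] Q7 Q8 tmul_simple)
  with nz show ?thesis by (simp add: grouplikes_def)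
qed

lemma eval_LR: "eval \<beta> (Rf \<beta> R) = eval \<beta> (Lf \<beta> R)"
  unfolding Defs.eval_def Lf_def Rf_def
  apply (simp add: sum_distrib_left mult_ac)
  apply (subst sum.swap)
  apply (simp add: mult_ac)
  done

end

lemma Q11:
  assumes hopf: "is_hopf H" and q: "qt H R R'"
  shows "Lf (cu H) R = un H"
proof -
  have cG: "cu H \<in> dual_grouplikes H" by (rule cu_grouplike[OF hopf])
  let ?e = "Lf (cu H) R" and ?e' = "Lf (cu H) R'"
  have ee: "hmul H ?e ?e = ?e" using Q10[OF hopf q cG cG] by (simp add: dmul_cu_left[OF hopf])
  have "?e = hmul H ?e (hmul H ?e ?e')" by (simp add: Q1[OF hopf q cG] hopfD(3)[OF hopf])
  also have "\<dots> = hmul H ?e ?e'" by (simp add: hopfD(1)[OF hopf, symmetric] ee)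
  also have "\<dots> = un H" by (rule Q1[OF hopf q cG])
  finally show ?thesis .
qed



lemma pow_sub: "x [^]\<^bsub>G\<lparr>carrier := K\<rparr>\<^esub> (n::nat) = x [^]\<^bsub>G\<^esub> n"
  by (induction n) simp_all

lemma funpow_pow:
  assumes "is_hopf H" "\<alpha> \<in> dual_grouplikes H"
  shows "(dmul H \<alpha> ^^ n) (cu H) = \<alpha> [^]\<^bsub>dgroup H\<^esub> (n::nat)"
proof (induction n)
  case 0
  then show ?case by (simp add: dgroup_def)
next
  case (Suc n)
  interpret M: monoid "dgroup H" by (rule dgroup_monoid[OF assms(1)])
  have ac: "\<alpha> \<in> carrier (dgroup H)" using assms(2) by (simp add: dgroup_def)
  show ?case using Suc M.nat_pow_Suc2[OF ac, of n] by (simp add: dgroup_def)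
qed

theorem mainTheorem14:
  fixes H :: "('b::finite, 'k::field) hopf_sc"
  assumes "is_hopf H"
    and "card (dual_grouplikes H) \<noteq> 1"
    and "dual_grouplikes H \<inter> dual_center H = {cu H}"
    and "grouplikes H \<inter> center H = {un H}"
    and "\<exists>p::nat. prime p \<and> odd p \<and> p dvd card (dual_grouplikes H) \<and>
           (\<forall>g \<in> grouplikes H. \<forall>\<alpha> \<in> dual_grouplikes H.
              elem_ord (hmul H) (un H) g = p \<longrightarrow> elem_ord (dmul H) (cu H) \<alpha> = p \<longrightarrow>
              eval \<alpha> g \<noteq> 1)"
  shows "\<not> (\<exists>R. is_universal_R H R)"
proof
  assume "\<exists>R. is_universal_R H R"
  then obtain R R' where q: "qt H R R'" unfolding is_universal_R_def qt_def by blast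
  note hopf = assms(1)
  obtain p :: nat where pp: "prime p" and podd: "odd p" and pdvd: "p dvd card (dual_grouplikes H)"
    and hyp: "\<forall>g \<in> grouplikes H. \<forall>\<alpha> \<in> dual_grouplikes H.
              elem_ord (hmul H) (un H) g = p \<longrightarrow> elem_ord (dmul H) (cu H) \<alpha> = p \<longrightarrow>
              eval \<alpha> g \<noteq> 1"
    using assms(5) by blast
  interpret Gd: group "dgroup H" by (rule dgroup_group[OF hopf])
  have carr: "carrier (dgroup H) = dual_grouplikes H" by (simp add: dgroup_def)
  have one: "\<one>\<^bsub>dgroup H\<^esub> = cu H" by (simp add: dgroup_def)
  have fin: "finite (carrier (dgroup H))" by (simp add: carr finite_dual_grouplikes[OF hopf])
  have ordG: "order (dgroup H) = p ^ 1 * (card (dual_grouplikes H) div p)"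
    using pdvd by (simp add: order_def carr)
  obtain K where K: "subgroup K (dgroup H)" "card K = p"
    using sylow_thm[OF pp Gd.is_group ordG fin] by auto
  have p1: "1 < p" by (rule prime_gt_1_nat[OF pp])
  obtain \<alpha> where aK: "\<alpha> \<in> K" and ane: "\<alpha> \<noteq> cu H"
  proof -
    have "\<not> K \<subseteq> {cu H}"
    proof
      assume "K \<subseteq> {cu H}"
      then have "card K \<le> 1" using card_mono[of "{cu H}" K] by simp
      with K(2) p1 show False by simp
    qed
    then show ?thesis using that by blast
  qed
  have ac: "\<alpha> \<in> carrier (dgroup H)" using aK subgroup.subset[OF K(1)] by blast
  have aG: "\<alpha> \<in> dual_grouplikes H" using ac carr by simp
  interpret Ks: group "(dgroup H)\<lparr>carrier := K\<rparr>"
    by (rule subgroup.subgroup_is_group[OF K(1) Gd.is_group])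
  have finK: "finite K" using fin subgroup.subset[OF K(1)] finite_subset by blast
  have "\<alpha> [^]\<^bsub>(dgroup H)\<lparr>carrier := K\<rparr>\<^esub> order ((dgroup H)\<lparr>carrier := K\<rparr>) = \<one>\<^bsub>(dgroup H)\<lparr>carrier := K\<rparr>\<^esub>"
    by (rule Ks.pow_order_eq_1) (simp add: aK)
  then have apow: "\<alpha> [^]\<^bsub>dgroup H\<^esub> p = cu H"
    by (simp add: pow_sub order_def K(2) one)
  have "Gd.ord \<alpha> dvd p" using Gd.pow_eq_id[OF ac] apow one by simp
  moreover have "Gd.ord \<alpha> \<noteq> 1" using Gd.ord_eq_1[OF ac] ane one by simp
  ultimately have ordp: "Gd.ord \<alpha> = p" using pp unfolding prime_nat_iff by auto
  have powiff: "\<alpha> [^]\<^bsub>dgroup H\<^esub> n = cu H \<longleftrightarrow> p dvd n" for n :: nat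
    using Gd.pow_eq_id[OF ac, of n] ordp one by simp
  have least: "(LEAST n::nat. 0 < n \<and> p dvd n) = p"
    by (rule Least_equality) (use p1 in \<open>auto dest: dvd_imp_le\<close>)
  have eoa: "elem_ord (dmul H) (cu H) \<alpha> = p"
    unfolding elem_ord_def by (simp add: funpow_pow[OF hopf aG] powiff least)
  define x where "x = Lf \<alpha> R"
  have powG: "\<alpha> [^]\<^bsub>dgroup H\<^esub> (n::nat) \<in> dual_grouplikes H" for n
    using Gd.nat_pow_closed[OF ac, of n] carr by simp
  have hp: "(hmul H x ^^ n) (un H) = Lf (\<alpha> [^]\<^bsub>dgroup H\<^esub> n) R" for n
  proof (induction n)
    case 0
    then show ?case using Q11[OF hopf q] by (simp add: one[symmetric])
  next
    case (Suc n)
    have "(hmul H x ^^ Suc n) (un H) = hmul H x (Lf (\<alpha> [^]\<^bsub>dgroup H\<^esub> n) R)" using Suc by simp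
    also have "\<dots> = Lf (dmul H \<alpha> (\<alpha> [^]\<^bsub>dgroup H\<^esub> n)) R"
      unfolding x_def by (rule Q10[OF hopf q aG powG, symmetric])
    also have "dmul H \<alpha> (\<alpha> [^]\<^bsub>dgroup H\<^esub> n) = \<alpha> [^]\<^bsub>dgroup H\<^esub> Suc n"
      using Gd.nat_pow_Suc2[OF ac, of n] by (simp add: dgroup_def)
    finally show ?case .
  qed
  have hpiff: "(hmul H x ^^ n) (un H) = un H \<longleftrightarrow> p dvd n" for n
  proof
    assume "(hmul H x ^^ n) (un H) = un H"
    then have "Lf (\<alpha> [^]\<^bsub>dgroup H\<^esub> n) R = un H" by (simp add: hp)
    then have "\<alpha> [^]\<^bsub>dgroup H\<^esub> n \<in> dual_center H" by (rule Q12[OF hopf q powG])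
    then have "\<alpha> [^]\<^bsub>dgroup H\<^esub> n = cu H" using assms(3) powG[of n] by blast
    then show "p dvd n" by (simp add: powiff)
  next
    assume "p dvd n"
    then have "\<alpha> [^]\<^bsub>dgroup H\<^esub> n = cu H" by (simp add: powiff)
    then show "(hmul H x ^^ n) (un H) = un H" by (simp add: hp Q11[OF hopf q])
  qed
  have eox: "elem_ord (hmul H) (un H) x = p"
    unfolding elem_ord_def by (simp add: hpiff least)
  have xg: "x \<in> grouplikes H" unfolding x_def by (rule Q9(1)[OF hopf q aG])
  have ne: "eval \<alpha> x \<noteq> 1" using hyp xg aG eox eoa by blast
  define y where "y = Rf \<alpha> R"
  define x' where "x' = Lf \<alpha> R'"
  have ma: "multf H \<alpha>" using aG by (simp add: dual_grouplikes_iff)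
  have invG: "inv\<^bsub>dgroup H\<^esub> \<alpha> \<in> dual_grouplikes H" using Gd.inv_closed[OF ac] carr by simp
  have invl: "dmul H (inv\<^bsub>dgroup H\<^esub> \<alpha>) \<alpha> = cu H" using Gd.l_inv[OF ac] by (simp add: dgroup_def)
  have z: "hmul H y x \<in> center H" "hmul H y x \<in> grouplikes H"
    unfolding x_def y_def using Q13[OF hopf q aG invG invl] Q14[OF hopf q aG] by auto
  then have zu: "hmul H y x = un H" using assms(4) by blast
  have xx': "hmul H x x' = un H" unfolding x_def x'_def by (rule Q1(1)[OF hopf q aG])
  have "y = hmul H y (hmul H x x')" by (simp add: xx' hopfD(3)[OF hopf])
  also have "\<dots> = x'" by (simp add: hopfD(1)[OF hopf, symmetric] zu hopfD(2)[OF hopf])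
  finally have yx': "y = x'" .
  define \<omega> where "\<omega> = eval \<alpha> x"
  have "\<omega> * \<omega> = eval \<alpha> x * eval \<alpha> x'"
    using eval_LR[OF hopf q aG] yx' unfolding \<omega>_def x_def y_def by simp
  also have "\<dots> = 1" by (simp add: eval_hmul[OF ma, symmetric] xx' eval_un[OF hopf aG])
  finally have w2: "\<omega> * \<omega> = 1" .
  have evp: "eval \<alpha> ((hmul H x ^^ n) (un H)) = \<omega> ^ n" for n
    by (induction n) (simp_all add: eval_un[OF hopf aG] eval_hmul[OF ma] \<omega>_def)
  have "\<omega> ^ p = 1" using evp[of p] hpiff[of p] eval_un[OF hopf aG] by simp
  moreover obtain k where "p = Suc (2 * k)" using podd oddE by (metis Suc_eq_plus1)
  ultimately have "\<omega> * (\<omega> * \<omega>) ^ k = 1" by (simp add: power_mult power2_eq_square)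
  then have "\<omega> = 1" using w2 by simp
  with ne show False by (simp add: \<omega>_def)
qed


end
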